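(* Let $q$ be a power of $2$, $n\ge 2$, and let $M=(m_{ij})$ be an $n\times n$ matrix with entries in $\mathbb{F}_q$. (a) $\mathrm{Num}'_0(M)_q\neq\emptyset$, and either $0\in\mathrm{Num}'_0(M)$ or $\mathrm{Num}_0(M)\supseteq\mathbb{F}_q^*$. (b) $\mathrm{Num}'_0(M)_q=\{0\}$ if and only if $m_{ii}+m_{ij}+m_{ji}+m_{jj}=0$ for all $1\le i<j\le n$. (c) Assume $\mathrm{Num}'_0(M)_q\neq\{0\}$. If $n=2$ then $\mathrm{Num}'_0(M)_q=\mathbb{F}_q^*$; if $n=3$ then $\mathrm{Num}'_0(M)_q\supseteq\mathbb{F}_q^*$; if $n\ge 4$ then $\mathrm{Num}'_0(M)_q=\mathbb{F}_q$.
   Context: The Hermitian form on $\mathbb{F}_{q^2}^n$ is $\langle u,v\rangle=\sum_i u_i^q v_i$. For an $n\times n$ matrix $M$ over $\mathbb{F}_{q^2}$: $\mathrm{Num}_0(M)=\{\langle u,Mu\rangle: u\in\mathbb{F}_{q^2}^n,\ \langle u,u\rangle=0\}$ and $\mathrm{Num}'_0(M)=\{\langle u,Mu\rangle: u\in\mathbb{F}_{q^2}^n\setminus\{0\},\ \langle u,u\rangle=0\}$. For $M$ with entries in $\mathbb{F}_q$: $\mathrm{Num}'_0(M)_q=\{\langle u,Mu\rangle: u\in\mathbb{F}_q^n\setminus\{0\},\ \langle u,u\rangle=0\}$; for $u=(x_1,\dots,x_n)\in\mathbb{F}_q^n$, $\langle u,u\rangle=\sum x_i^2$ and $\langle u,Mu\rangle=\sum_{i,j}m_{ij}x_ix_j$.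 *)

theory Defs
  imports Main
begin

text \<open>F_{q^2} is modelled as a finite field type 'a with CARD('a) = q^2;
  F_q is its unique subfield of order q, i.e. the fixed points of x \<mapsto> x^q.\<close>

definition subfield_q :: "nat \<Rightarrow> ('a::field) set" where
  "subfield_q q = {x. x ^ q = x}"

definition vecs :: "nat \<Rightarrow> 'a set \<Rightarrow> (nat \<Rightarrow> ('a::zero)) set" where
  "vecs n S = {u. (\<forall>i<n. u i \<in> S) \<and> (\<forall>i\<ge>n. u i = 0)}"

definition herm :: "nat \<Rightarrow> nat \<Rightarrow> (nat \<Rightarrow> 'a::field) \<Rightarrow> (nat \<Rightarrow> 'a) \<Rightarrow> 'a" where
  "herm q n u v = (\<Sum>i<n. u i ^ q * v i)"

definition matvec :: "nat \<Rightarrow> (nat \<Rightarrow> nat \<Rightarrow> 'a::field) \<Rightarrow> (nat \<Rightarrow> 'a) \<Rightarrow> (nat \<Rightarrow> 'a)" where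
  "matvec n M u = (\<lambda>i. if i < n then (\<Sum>j<n. M i j * u j) else 0)"

definition Num0 :: "nat \<Rightarrow> nat \<Rightarrow> (nat \<Rightarrow> nat \<Rightarrow> 'a::field) \<Rightarrow> 'a set" where
  "Num0 q n M = {herm q n u (matvec n M u) | u. u \<in> vecs n UNIV \<and> herm q n u u = 0}"

definition Num0' :: "nat \<Rightarrow> nat \<Rightarrow> (nat \<Rightarrow> nat \<Rightarrow> 'a::field) \<Rightarrow> 'a set" where
  "Num0' q n M = {herm q n u (matvec n M u) | u.
      u \<in> vecs n UNIV \<and> u \<noteq> (\<lambda>_. 0) \<and> herm q n u u = 0}"

definition Num0'_q :: "nat \<Rightarrow> nat \<Rightarrow> (nat \<Rightarrow> nat \<Rightarrow> 'a::field) \<Rightarrow> 'a set" where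
  "Num0'_q q n M = {herm q n u (matvec n M u) | u.
      u \<in> vecs n (subfield_q q) \<and> u \<noteq> (\<lambda>_. 0) \<and> herm q n u u = 0}"

end

theory Submission imports Defs "HOL-Number_Theory.Number_Theory" begin

lemma char2:
  assumes "card (UNIV :: 'a::{field,finite} set) = (2^k)^2" "k \<ge> 1"
  shows "(2::'a) = 0"
proof -
  have p: "prime CHAR('a)"
    by (intro prime_CHAR_semidom finite_imp_CHAR_pos) simp
  have "CHAR('a) dvd 2^(2*k)" using CHAR_dvd_CARD[where 'a='a] assms by (simp add: power_mult[symmetric] mult.commute)
  hence "CHAR('a) dvd 2" using p prime_dvd_power by blast
  hence "CHAR('a) = 2" using p by (metis prime_nat_iff two_is_prime_nat prime_gt_1_nat nat_neq_iff)
  thus ?thesis by (metis of_nat_CHAR of_nat_numeral)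
qed

lemma c2_neg: assumes "(2::'a::field) = 0" shows "- (x::'a) = x"
proof -
  have "x + x = 2 * x" by simp
  hence "x + x = 0" using assms by simp
  thus ?thesis by (simp add: add_eq_0_iff2 eq_neg_iff_add_eq_0)
qed

lemma c2_add: assumes "(2::'a::field) = 0" shows "(x::'a) + x = 0"
proof -
  have "x + x = 2 * x" by simp
  thus ?thesis using assms by simp
qed

lemma c2_sq: assumes "(2::'a::field) = 0" shows "((x::'a) + y)^2 = x^2 + y^2"
proof -
  have "(x+y)^2 = x^2 + y^2 + 2*x*y" by (simp add: power2_eq_square algebra_simps)
  thus ?thesis using assms by simp
qed

lemma c2_frob: assumes "(2::'a::field) = 0" shows "((x::'a) + y)^(2^k) = x^(2^k) + y^(2^k)"
proof (induction k)
  case 0 then show ?case by simp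
next
  case (Suc k)
  have "(x+y)^(2^Suc k) = ((x+y)^(2^k))^2" by (simp add: power_mult[symmetric] mult.commute)
  also have "\<dots> = (x^(2^k) + y^(2^k))^2" using Suc by simp
  also have "\<dots> = (x^(2^k))^2 + (y^(2^k))^2" using c2_sq[OF assms] by blast
  also have "\<dots> = x^(2^Suc k) + y^(2^Suc k)" by (simp add: power_mult[symmetric] mult.commute)
  finally show ?case .
qed

lemma c2_sum_sq: assumes "(2::'a::field) = 0" "finite A"
  shows "(sum (f::_\<Rightarrow>'a) A)^2 = (\<Sum>i\<in>A. (f i)^2)"
  using assms(2) by (induction A rule: finite_induct) (auto simp: c2_sq[OF assms(1)])

lemma sub_add: assumes "(2::'a::field) = 0" "x \<in> subfield_q (2^k)" "y \<in> subfield_q (2^k)"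
  shows "(x::'a) + y \<in> subfield_q (2^k)"
  using assms by (simp add: subfield_q_def c2_frob)

lemma sub_mult: assumes "x \<in> subfield_q q" "y \<in> subfield_q q"
  shows "(x::'a::field) * y \<in> subfield_q q"
  using assms by (simp add: subfield_q_def power_mult_distrib)

lemma sub_inv: assumes "x \<in> subfield_q q"
  shows "inverse (x::'a::field) \<in> subfield_q q"
  using assms by (simp add: subfield_q_def power_inverse)

lemma sub_0: "(0::'a::field) \<in> subfield_q (2^k)"
  by (simp add: subfield_q_def)

lemma sub_1: "(1::'a::field) \<in> subfield_q q"
  by (simp add: subfield_q_def)

lemma sub_sum: assumes "(2::'a::field) = 0" "\<forall>i\<in>A. f i \<in> subfield_q (2^k)"
  shows "sum (f::_\<Rightarrow>'a) A \<in> subfield_q (2^k)"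
proof (cases "finite A")
  case True
  then show ?thesis using assms(2)
    by (induction A rule: finite_induct) (auto intro: sub_add[OF assms(1)] sub_0)
qed (simp add: sub_0)

lemma sub_sqrt: assumes "(2::'a::{field,finite}) = 0" "d \<in> subfield_q q"
  shows "\<exists>s \<in> subfield_q q. s^2 = (d::'a)"
proof -
  let ?F = "subfield_q q :: 'a set"
  have "(\<lambda>x. x^2) ` ?F \<subseteq> ?F"
  proof
    fix y assume "y \<in> (\<lambda>x. x^2) ` ?F"
    then obtain x where x: "x \<in> ?F" "y = x^2" by auto
    have "(x^2)^q = (x^q)^2" by (metis power_mult mult.commute)
    thus "y \<in> ?F" using x by (simp add: subfield_q_def)
  qed
  moreover have "inj_on (\<lambda>x. x^2) ?F"
  proof (rule inj_onI)
    fix x y :: 'a assume "x^2 = y^2"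
    hence "(x + y)^2 = 0" using c2_sq[OF assms(1)] c2_add[OF assms(1)] by simp
    hence "x + y = 0" by simp
    thus "x = y" using c2_neg[OF assms(1), of y] by (simp add: add_eq_0_iff2)
  qed
  ultimately have "(\<lambda>x. x^2) ` ?F = ?F" by (intro endo_inj_surj) auto
  thus ?thesis using assms(2) by (metis imageE)
qed

definition Bm :: "nat \<Rightarrow> (nat \<Rightarrow> nat \<Rightarrow> 'a::field) \<Rightarrow> (nat \<Rightarrow> 'a) \<Rightarrow> (nat \<Rightarrow> 'a) \<Rightarrow> 'a" where
  "Bm n M u v = (\<Sum>a<n. \<Sum>b<n. M a b * u a * v b)"

definition Ls :: "nat \<Rightarrow> (nat \<Rightarrow> 'a::field) \<Rightarrow> 'a" where
  "Ls n u = (\<Sum>a<n. u a)"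

definition ev :: "nat \<Rightarrow> nat \<Rightarrow> 'a::field" where
  "ev i = (\<lambda>k. if k = i then 1 else 0)"

lemma Bm_add_l[simp]: "Bm n M (\<lambda>k. u k + v k) w = Bm n M u w + Bm n M v w"
  by (simp add: Bm_def algebra_simps sum.distrib)
lemma Bm_add_r[simp]: "Bm n M w (\<lambda>k. u k + v k) = Bm n M w u + Bm n M w v"
  by (simp add: Bm_def algebra_simps sum.distrib)
lemma Bm_smult_l[simp]: "Bm n M (\<lambda>k. c * u k) w = c * Bm n M u w"
  by (simp add: Bm_def sum_distrib_left algebra_simps)
lemma Bm_smult_r[simp]: "Bm n M w (\<lambda>k. c * u k) = c * Bm n M w u"
  by (simp add: Bm_def sum_distrib_left algebra_simps)
lemma Bm_ev[simp]: assumes "i < n" "j < n" shows "Bm n M (ev i) (ev j) = M i j"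
proof -
  have "\<And>a. (\<Sum>b<n. M a b * ev i a * ev j b) = (if a = i then M a j else 0)"
    using \<open>j < n\<close> by (simp add: ev_def mult_ac if_distrib cong: if_cong)
  thus ?thesis using \<open>i < n\<close> by (simp add: Bm_def)
qed

lemma Ls_lin[simp]: "Ls n (\<lambda>k. x * u k + y * w k) = x * Ls n u + y * Ls n w"
  by (simp add: Ls_def sum.distrib sum_distrib_left)
lemma Ls_add[simp]: "Ls n (\<lambda>k. u k + w k) = Ls n u + Ls n w"
  by (simp add: Ls_def sum.distrib)
lemma Ls_smult[simp]: "Ls n (\<lambda>k. x * u k) = x * Ls n u"
  by (simp add: Ls_def sum_distrib_left)
lemma Ls_ev[simp]: "i < n \<Longrightarrow> Ls n (ev i) = 1"
  by (simp add: Ls_def ev_def)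

lemma herm_Q: assumes "u \<in> vecs n (subfield_q q)"
  shows "herm q n u (matvec n M u) = Bm n M u u"
proof -
  have "herm q n u (matvec n M u) = (\<Sum>a<n. u a * (\<Sum>b<n. M a b * u b))"
    using assms unfolding herm_def by (intro sum.cong) (auto simp: matvec_def vecs_def subfield_q_def)
  also have "\<dots> = Bm n M u u" by (simp add: Bm_def sum_distrib_left algebra_simps)
  finally show ?thesis .
qed

lemma herm_L: assumes "(2::'a::field) = 0" "u \<in> vecs n (subfield_q q)"
  shows "herm q n (u::nat\<Rightarrow>'a) u = (Ls n u)^2"
proof -
  have "herm q n u u = (\<Sum>a<n. (u a)^2)"
    using assms unfolding herm_def by (intro sum.cong) (auto simp: vecs_def subfield_q_def power2_eq_square)
  also have "\<dots> = (Ls n u)^2" by (simp add: Ls_def c2_sum_sq[OF assms(1)])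
  finally show ?thesis .
qed

lemma Num0'_q_char: assumes "(2::'a::field) = 0"
  shows "Num0'_q q n (M::nat\<Rightarrow>nat\<Rightarrow>'a) = {Bm n M u u | u. u \<in> vecs n (subfield_q q) \<and> u \<noteq> (\<lambda>_. 0) \<and> Ls n u = 0}"
  unfolding Num0'_q_def using herm_Q herm_L[OF assms] by (metis (no_types, opaque_lifting) zero_power2 power_zero_numeral zero_eq_power2)

lemma vecs_lin: assumes "(2::'a::field) = 0" "u \<in> vecs n (subfield_q (2^k))" "w \<in> vecs n (subfield_q (2^k))"
  "x \<in> subfield_q (2^k)" "y \<in> subfield_q (2^k)"
  shows "(\<lambda>i. x * u i + y * w i) \<in> vecs n (subfield_q (2^k) :: 'a set)"
  using assms by (auto simp: vecs_def intro!: sub_add sub_mult)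

lemma ev_vecs: "i < n \<Longrightarrow> ev i \<in> vecs n (subfield_q (2^k))"
  by (auto simp: vecs_def ev_def sub_0 sub_1)

lemma Bm_sub: assumes "(2::'a::field) = 0" "u \<in> vecs n (subfield_q (2^k))" "\<forall>i<n. \<forall>j<n. M i j \<in> subfield_q (2^k)"
  "w \<in> vecs n (subfield_q (2^k))"
  shows "Bm n M u (w::nat\<Rightarrow>'a) \<in> subfield_q (2^k)"
  using assms unfolding Bm_def vecs_def by (auto intro!: sub_sum[OF assms(1)] sub_mult)

lemma alt_zero: fixes n :: nat assumes "\<forall>a<n. c a a = (0::'a::field)" "\<forall>a<n. \<forall>b<n. c a b + c b a = 0"
  shows "(\<Sum>a<n. \<Sum>b<n. c a b * u a * u b) = 0"
  using assms
proof (induction n)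
  case 0 then show ?case by simp
next
  case (Suc n)
  have IH: "(\<Sum>a<n. \<Sum>b<n. c a b * u a * u b) = 0" using Suc by auto
  have "(\<Sum>a<Suc n. \<Sum>b<Suc n. c a b * u a * u b) =
     (\<Sum>a<n. \<Sum>b<n. c a b * u a * u b) + (\<Sum>a<n. (c a n + c n a) * u a * u n) + c n n * u n * u n"
    by (simp add: sum.distrib algebra_simps)
  also have "\<dots> = 0" using IH Suc.prems by simp
  finally show ?case .
qed

lemma factA: assumes c2: "(2::'a::field) = 0"
  and P: "\<forall>i j. i < j \<and> j < n \<longrightarrow> M i i + M i j + M j i + M j j = (0::'a)"
  and L: "Ls n u = 0"
  shows "Bm n M u u = 0"
proof -
  have e: "(X + Z) * y + Z * y = X * (y::'a)" for X Z y
  proof -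
    have "(X + Z) * y + Z * y = X * y + (Z + Z) * y" by (simp add: algebra_simps)
    thus ?thesis using c2_add[OF c2, of Z] by simp
  qed
  have "Bm n M u u = (\<Sum>a<n. \<Sum>b<n. (M a b + M b b) * u a * u b + M b b * u a * u b)"
    unfolding Bm_def using e[of "M _ _" "M _ _" "u _ * u _"] by (simp add: mult.assoc)
  also have "\<dots> = (\<Sum>a<n. \<Sum>b<n. (M a b + M b b) * u a * u b) + (\<Sum>a<n. u a) * (\<Sum>b<n. M b b * u b)"
    by (simp add: sum.distrib sum_product algebra_simps c2)
  also have "(\<Sum>a<n. \<Sum>b<n. (M a b + M b b) * u a * u b) = 0"
  proof (rule alt_zero)
    show "\<forall>a<n. M a a + M a a = 0" using c2_add[OF c2] by simp
    show "\<forall>a<n. \<forall>b<n. M a b + M b b + (M b a + M a a) = 0"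
    proof (intro allI impI)
      fix a b assume "a < n" "b < n"
      consider "a < b" | "a = b" | "b < a" by linarith
      thus "M a b + M b b + (M b a + M a a) = 0"
      proof cases
        case 1
        hence h: "M a a + M a b + M b a + M b b = 0" using P \<open>b < n\<close> by blast
        have "M a b + M b b + (M b a + M a a) = M a a + M a b + M b a + M b b" by (simp add: ac_simps)
        thus ?thesis using h by simp
      next
        case 2 thus ?thesis using c2_add[OF c2] by (metis add.assoc add_0)
      next
        case 3
        hence h: "M b b + M b a + M a b + M a a = 0" using P \<open>a < n\<close> by blast
        have "M a b + M b b + (M b a + M a a) = M b b + M b a + M a b + M a a" by (simp add: ac_simps)
        thus ?thesis using h by simp
      qed
    qed
  qed
  finally show ?thesis using L by (simp add: Ls_def)
qed

lemma Q_lin: "Bm n M (\<lambda>k. x*u k + y*w k) (\<lambda>k. x*u k + y*w k) =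
   x^2 * Bm n M u u + y^2 * Bm n M w w + x*y*(Bm n M u w + Bm n M w u)"
  by (simp add: algebra_simps power2_eq_square)

lemma factE:
  fixes M :: "nat \<Rightarrow> nat \<Rightarrow> 'a::{field,finite}"
  assumes c2: "(2::'a) = 0" and ME: "\<forall>i<n. \<forall>j<n. M i j \<in> subfield_q (2^k)" and n4: "4 \<le> n"
  shows "\<exists>u. u \<in> vecs n (subfield_q (2^k)) \<and> u \<noteq> (\<lambda>_. 0) \<and> Ls n u = 0 \<and> Bm n M u u = 0"
proof -
  let ?F = "subfield_q (2^k) :: 'a set"
  have two: "(1::'a) + 1 = 0" using c2 by simp
  define v where "v = (\<lambda>i. 1 * ev 0 i + 1 * ev 1 i :: 'a)"
  define w where "w = (\<lambda>i. 1 * ev 0 i + 1 * ev 2 i :: 'a)"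
  define t where "t = (\<lambda>i. 1 * ev 0 i + 1 * ev 3 i :: 'a)"
  have vF: "v \<in> vecs n ?F" unfolding v_def using n4 by (intro vecs_lin[OF c2] ev_vecs sub_1) auto
  have wF: "w \<in> vecs n ?F" unfolding w_def using n4 by (intro vecs_lin[OF c2] ev_vecs sub_1) auto
  have tF: "t \<in> vecs n ?F" unfolding t_def using n4 by (intro vecs_lin[OF c2] ev_vecs sub_1) auto
  have Lv: "Ls n v = 0" unfolding v_def using n4 two by simp
  have Lw: "Ls n w = 0" unfolding w_def using n4 two by simp
  have Lt: "Ls n t = 0" unfolding t_def using n4 two by simp
  have vals: "v 1 = 1" "v 2 = 0" "v 3 = 0" "w 1 = 0" "w 2 = 1" "t 1 = 0" "t 2 = 0" "t 3 = 1"
    by (simp_all add: v_def w_def t_def ev_def)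
  obtain w' c where w'F: "w' \<in> vecs n ?F" and Lw': "Ls n w' = 0" and w'1: "w' 1 = 0"
    and w'c: "w' c = 1" and vc: "v c = 0" and P: "Bm n M v w' + Bm n M w' v = 0"
  proof (cases "Bm n M v t + Bm n M t v = 0")
    case True
    show ?thesis by (rule that[of t 3]) (use True tF Lt vals in auto)
  next
    case False
    define d where "d = Bm n M v w + Bm n M w v"
    define e where "e = Bm n M v t + Bm n M t v"
    have "e \<noteq> 0" using False e_def by simp
    define w' where "w' = (\<lambda>i. 1 * w i + (d/e) * t i)"
    have "Bm n M v w' + Bm n M w' v = (Bm n M v w + Bm n M w v) + (d/e) * (Bm n M v t + Bm n M t v)"
      unfolding w'_def by (simp only: Bm_add_l Bm_add_r Bm_smult_l Bm_smult_r) (simp add: algebra_simps)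
    also have "\<dots> = d + (d/e) * e" unfolding d_def e_def ..
    also have "\<dots> = 0" using \<open>e \<noteq> 0\<close> c2_add[OF c2] by simp
    finally have P: "Bm n M v w' + Bm n M w' v = 0" .
    have dF: "d \<in> ?F" unfolding d_def
      by (rule sub_add[OF c2 Bm_sub[OF c2 vF ME wF] Bm_sub[OF c2 wF ME vF]])
    have eF: "e \<in> ?F" unfolding e_def
      by (rule sub_add[OF c2 Bm_sub[OF c2 vF ME tF] Bm_sub[OF c2 tF ME vF]])
    have deF: "d / e \<in> ?F" unfolding divide_inverse by (rule sub_mult[OF dF sub_inv[OF eF]])
    have w'F: "w' \<in> vecs n ?F" unfolding w'_def by (rule vecs_lin[OF c2 wF tF sub_1 deF])
    have "Ls n w' = 0" unfolding w'_def by (simp only: Ls_lin) (simp add: Lw Lt)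
    show ?thesis by (rule that[of w' 2]) (use w'F \<open>Ls n w' = 0\<close> P vals in \<open>auto simp: w'_def\<close>)
  qed
  have QvF: "Bm n M v v \<in> ?F" using Bm_sub[OF c2 vF ME vF] .
  have QwF: "Bm n M w' w' \<in> ?F" using Bm_sub[OF c2 w'F ME w'F] .
  obtain a where aF: "a \<in> ?F" and a: "a^2 = Bm n M v v" using sub_sqrt[OF c2 QvF] by blast
  obtain b where bF: "b \<in> ?F" and b: "b^2 = Bm n M w' w'" using sub_sqrt[OF c2 QwF] by blast
  show ?thesis
  proof (cases "a = 0 \<and> b = 0")
    case True
    have "v \<noteq> (\<lambda>_. 0)" using vals by (metis one_neq_zero)
    thus ?thesis using vF Lv a True by auto
  next
    case False
    define u where "u = (\<lambda>i. b * v i + a * w' i)"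
    have uF: "u \<in> vecs n ?F" unfolding u_def by (rule vecs_lin[OF c2 vF w'F bF aF])
    have Lu: "Ls n u = 0" unfolding u_def by (simp only: Ls_lin) (simp add: Lv Lw')
    have "Bm n M u u = b^2 * a^2 + a^2 * b^2" unfolding u_def Q_lin using a b P by simp
    also have "\<dots> = 0" using c2 by (simp add: mult.commute)
    finally have Qu: "Bm n M u u = 0" .
    have "u \<noteq> (\<lambda>_. 0)"
    proof
      assume u0: "u = (\<lambda>_. 0)"
      have "u c = a" "u 1 = b" using w'c vc w'1 vals by (simp_all add: u_def)
      thus False using u0 False by simp
    qed
    thus ?thesis using uF Lu Qu by blast
  qed
qed

lemma pair_vec:
  fixes M :: "nat \<Rightarrow> nat \<Rightarrow> 'a::{field,finite}"
  assumes c2: "(2::'a) = 0" and "i < n" "j < n" "i \<noteq> j" "s \<in> subfield_q (2^k)"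
  shows "(\<lambda>l. s * ev i l + s * ev j l) \<in> vecs n (subfield_q (2^k))"
    "Ls n (\<lambda>l. s * ev i l + s * ev j l) = 0"
    "Bm n M (\<lambda>l. s * ev i l + s * ev j l) (\<lambda>l. s * ev i l + s * ev j l) = s^2 * (M i i + M i j + M j i + M j j)"
    "(\<lambda>l. s * ev i l + s * ev j l) i = s"
proof -
  show "(\<lambda>l. s * ev i l + s * ev j l) \<in> vecs n (subfield_q (2^k))"
    using assms by (intro vecs_lin ev_vecs) auto
  show "Ls n (\<lambda>l. s * ev i l + s * ev j l) = 0"
    using assms by (simp only: Ls_lin) (simp add: distrib_left[symmetric])
  show "Bm n M (\<lambda>l. s * ev i l + s * ev j l) (\<lambda>l. s * ev i l + s * ev j l) = s^2 * (M i i + M i j + M j i + M j j)"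
    unfolding Q_lin using assms by (simp add: algebra_simps power2_eq_square)
  show "(\<lambda>l. s * ev i l + s * ev j l) i = s" using assms by (simp add: ev_def)
qed

theorem proposition6:
  fixes M :: "nat \<Rightarrow> nat \<Rightarrow> 'a::{field, finite}"
    and q k n :: nat
  assumes q_def: "q = 2 ^ k" and k_pos: "k \<ge> 1"
    and card: "card (UNIV :: 'a set) = q ^ 2"
    and n_ge: "n \<ge> 2"
    and M_entries: "\<forall>i<n. \<forall>j<n. M i j \<in> subfield_q q"
  shows
    "(Num0'_q q n M \<noteq> {} \<and>
        (0 \<in> Num0' q n M \<or> subfield_q q - {0} \<subseteq> Num0 q n M))
     \<and> (Num0'_q q n M = {0} \<longleftrightarrow>
          (\<forall>i j. i < j \<and> j < n \<longrightarrow> M i i + M i j + M j i + M j j = 0))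
     \<and> (Num0'_q q n M \<noteq> {0} \<longrightarrow>
          (n = 2 \<longrightarrow> Num0'_q q n M = subfield_q q - {0}) \<and>
          (n = 3 \<longrightarrow> subfield_q q - {0} \<subseteq> Num0'_q q n M) \<and>
          (n \<ge> 4 \<longrightarrow> Num0'_q q n M = subfield_q q))"
proof -
  have c2: "(2::'a) = 0" using char2[of k] card q_def k_pos by simp
  let ?F = "subfield_q (2^k) :: 'a set"
  have ME: "\<forall>i<n. \<forall>j<n. M i j \<in> ?F" using M_entries q_def by simp
  define N where "N = Num0'_q q n M"
  have Nc: "N = {Bm n M u u | u. u \<in> vecs n ?F \<and> u \<noteq> (\<lambda>_. 0) \<and> Ls n u = 0}"
    unfolding N_def q_def by (rule Num0'_q_char[OF c2])
  define P where "P = (\<forall>i j. i < j \<and> j < n \<longrightarrow> M i i + M i j + M j i + M j j = 0)"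
  have pairN: "s^2 * (M i i + M i j + M j i + M j j) \<in> N"
    if "i < n" "j < n" "i \<noteq> j" "s \<in> ?F" "s \<noteq> 0" for i j s
  proof -
    let ?u = "\<lambda>l. s * ev i l + s * ev j l"
    note pv = pair_vec[OF c2 that(1-4)]
    have "?u \<noteq> (\<lambda>_. 0)" using pv(4) that(5) by (metis)
    moreover have "s^2 * (M i i + M i j + M j i + M j j) = Bm n M ?u ?u" using pv(3)[where M=M] by simp
    ultimately show ?thesis unfolding Nc using pv(1,2) by blast
  qed
  have NF: "N \<subseteq> ?F" unfolding Nc using Bm_sub[OF c2 _ ME] by blast
  have Nne: "N \<noteq> {}" using pairN[of 0 1 1] n_ge sub_1 by fastforce
  have A: "N = {0}" if P
  proof -
    have "N \<subseteq> {0}" unfolding Nc using factA[OF c2] that unfolding P_def by blast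
    thus ?thesis using Nne by blast
  qed
  have B: "?F - {0} \<subseteq> N" if "\<not> P"
  proof
    fix d assume d: "d \<in> ?F - {0}"
    have "\<exists>i j. i < j \<and> j < n \<and> M i i + M i j + M j i + M j j \<noteq> 0"
      using that unfolding P_def by simp
    then obtain i j where ij: "i < j" "j < n" and c: "M i i + M i j + M j i + M j j \<noteq> 0"
      by blast
    let ?c = "M i i + M i j + M j i + M j j"
    have cF: "?c \<in> ?F" using ME ij by (intro sub_add[OF c2]) auto
    have "d / ?c \<in> ?F" unfolding divide_inverse using d by (intro sub_mult sub_inv cF) auto
    then obtain s where sF: "s \<in> ?F" and s: "s^2 = d / ?c" using sub_sqrt[OF c2] by blast
    have "s \<noteq> 0" using s d c by auto
    have "s^2 * ?c = d" using s c by simp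
    thus "d \<in> N" using pairN[OF _ _ _ sF \<open>s \<noteq> 0\<close>, of i j] ij by auto
  qed
  have sub1: "N \<subseteq> Num0' q n M" "N \<subseteq> Num0 q n M"
    unfolding N_def Num0'_q_def Num0'_def Num0_def vecs_def by auto
  have D: "N \<subseteq> ?F - {0}" if "n = 2" "\<not> P"
  proof
    fix x assume "x \<in> N"
    then obtain u where u: "x = Bm n M u u" "u \<in> vecs n ?F" "u \<noteq> (\<lambda>_. 0)" "Ls n u = 0"
      unfolding Nc by blast
    have "u 0 + u 1 = 0" using u(4) that(1) by (simp add: Ls_def numeral_2_eq_2)
    hence "u 1 = - u 0" by (simp add: add_eq_0_iff)
    hence u1: "u 1 = u 0" using c2_neg[OF c2, of "u 0"] by simp
    have ueq: "u = (\<lambda>l. u 0 * ev 0 l + u 0 * ev 1 l)"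
    proof
      fix l show "u l = u 0 * ev 0 l + u 0 * ev 1 l"
      proof -
        have "l = 0 \<or> l = 1 \<or> l \<ge> 2" by arith
        thus ?thesis using u(2) that(1) u1 by (auto simp: vecs_def ev_def)
      qed
    qed
    have "u 0 \<noteq> 0" using u(3) ueq by force
    obtain i j where ij: "i < j" "j < 2" and cij: "M i i + M i j + M j i + M j j \<noteq> 0"
      using \<open>\<not> P\<close> \<open>n = 2\<close> unfolding P_def by auto
    have "i = 0" "j = 1" using ij by arith+
    hence c: "M 0 0 + M 0 1 + M 1 0 + M 1 1 \<noteq> 0" using cij by simp
    have "u 0 \<in> ?F" using u(2) that(1) by (simp add: vecs_def)
    have "x = (u 0)^2 * (M 0 0 + M 0 1 + M 1 0 + M 1 1)"
      using u(1) ueq pair_vec(3)[OF c2, where i=0 and j=1 and s="u 0" and M=M and n=n and k=k] that(1) \<open>u 0 \<in> ?F\<close> by simp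
    hence "x \<noteq> 0" using c \<open>u 0 \<noteq> 0\<close> by simp
    thus "x \<in> ?F - {0}" using \<open>x \<in> N\<close> NF by blast
  qed
  have E: "0 \<in> N" if "n \<ge> 4"
    using factE[OF c2 ME that] unfolding Nc by force
  have one: "(1::'a) \<in> ?F - {0}" using sub_1 by simp
  show ?thesis
    unfolding N_def[symmetric] P_def[symmetric] q_def[symmetric]
  proof (intro conjI impI)
    show "N \<noteq> {}" by (rule Nne)
    show "0 \<in> Num0' q n M \<or> subfield_q q - {0} \<subseteq> Num0 q n M"
      using A B sub1 q_def by blast
    show "N = {0} \<longleftrightarrow> P" using A B one by blast
    assume "N \<noteq> {0}"
    hence nP: "\<not> P" using A by blast
    show "N = subfield_q q - {0}" if "n = 2" using D[OF that nP] B[OF nP] q_def by blast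
    show "subfield_q q - {0} \<subseteq> N" if "n = 3" using B[OF nP] q_def by blast
    show "N = subfield_q q" if "n \<ge> 4" using B[OF nP] E[OF that] NF q_def by blast
  qed
qed

end
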